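(* Let $m\ge1$ and let $G$ be a graph with $n$ vertices that contains no induced copy of $mK_5$ (the disjoint union of $m$ copies of $K_5$). Then $$\tilde b(G)\le 4^{m-1}\,3^{(n-5(m-1))/4}=\left(\frac{4}{3^{5/4}}\right)^{m-1}3^{n/4}.$$
   Context: $\mathrm{Ind}(G)$ is the independence complex of $G$ (including the empty face), and $\tilde b(G)=\sum_{i\ge-1}\dim_{\mathbb{K}}\widetilde H_i(\mathrm{Ind}(G);\mathbb{K})$ for a fixed field $\mathbb{K}$. *)

theory Defs
  imports Complex_Main "HOL-Library.Function_Algebras"
begin

definition simple_graph :: "'a set \<Rightarrow> ('a \<Rightarrow> 'a \<Rightarrow> bool) \<Rightarrow> bool" where
  "simple_graph V E \<longleftrightarrow> finite V \<and> (\<forall>u v. E u v \<longrightarrow> u \<in> V \<and> v \<in> V)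
     \<and> (\<forall>u v. E u v \<longrightarrow> E v u) \<and> (\<forall>u. \<not> E u u)"

text \<open>Faces of the independence complex (the empty set included).\<close>
definition indep :: "'a set \<Rightarrow> ('a \<Rightarrow> 'a \<Rightarrow> bool) \<Rightarrow> 'a set \<Rightarrow> bool" where
  "indep V E s \<longleftrightarrow> s \<subseteq> V \<and> (\<forall>u\<in>s. \<forall>v\<in>s. \<not> E u v)"

text \<open>Faces with k vertices, i.e. of dimension k-1.\<close>
definition faces :: "'a set \<Rightarrow> ('a \<Rightarrow> 'a \<Rightarrow> bool) \<Rightarrow> nat \<Rightarrow> 'a set set" where
  "faces V E k = {s. indep V E s \<and> card s = k}"

definition fscale :: "'k::field \<Rightarrow> ('a set \<Rightarrow> 'k) \<Rightarrow> ('a set \<Rightarrow> 'k)" where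
  "fscale c f = (\<lambda>x. c * f x)"

text \<open>Chain group C_{k-1} of the augmented (reduced) chain complex:
  K-linear combinations of faces with k vertices.\<close>
definition chains :: "'a set \<Rightarrow> ('a \<Rightarrow> 'a \<Rightarrow> bool) \<Rightarrow> nat \<Rightarrow> ('a set \<Rightarrow> 'k::field) set" where
  "chains V E k = {f. \<forall>s. f s \<noteq> 0 \<longrightarrow> s \<in> faces V E k}"

text \<open>Boundary map from chains on k-vertex faces to chains on (k-1)-vertex faces,
  with the standard sign convention w.r.t. the linear order of the vertices:
  for s = {v_0 < ... < v_{k-1}}, d(e_s) = sum_j (-1)^j e_{s - {v_j}}.\<close>
definition bdry :: "'a::linorder set \<Rightarrow> ('a \<Rightarrow> 'a \<Rightarrow> bool) \<Rightarrow> nat \<Rightarrow> ('a set \<Rightarrow> 'k::field) \<Rightarrow> ('a set \<Rightarrow> 'k)" where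
  "bdry V E k f = (\<lambda>t. if k = 0 \<or> t \<notin> faces V E (k - 1) then 0 else
      (\<Sum>v\<in>{v \<in> V - t. insert v t \<in> faces V E k}.
          (-1) ^ card {u \<in> t. u < v} * f (insert v t)))"

text \<open>Dimension of the reduced homology of Ind(G) in dimension k-1 over the field 'k:
  dim ker d_k - dim im d_{k+1}.\<close>
definition red_betti :: "'k::field itself \<Rightarrow> 'a::linorder set \<Rightarrow> ('a \<Rightarrow> 'a \<Rightarrow> bool) \<Rightarrow> nat \<Rightarrow> nat" where
  "red_betti K V E k =
     vector_space.dim (fscale :: 'k \<Rightarrow> _) {f \<in> (chains V E k :: ('a set \<Rightarrow> 'k) set). bdry V E k f = 0}
     - vector_space.dim (fscale :: 'k \<Rightarrow> _) (bdry V E (Suc k) ` (chains V E (Suc k) :: ('a set \<Rightarrow> 'k) set))"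

text \<open>Total reduced Betti number: sum over all dimensions i >= -1 (faces have at most |V| vertices).\<close>
definition total_red_betti :: "'k::field itself \<Rightarrow> 'a::linorder set \<Rightarrow> ('a \<Rightarrow> 'a \<Rightarrow> bool) \<Rightarrow> nat" where
  "total_red_betti K V E = (\<Sum>k\<in>{0..card V}. red_betti K V E k)"

definition has_induced_mK5 :: "'a set \<Rightarrow> ('a \<Rightarrow> 'a \<Rightarrow> bool) \<Rightarrow> nat \<Rightarrow> bool" where
  "has_induced_mK5 V E m \<longleftrightarrow> (\<exists>B :: nat \<Rightarrow> 'a set.
      (\<forall>i<m. B i \<subseteq> V \<and> card (B i) = 5 \<and> (\<forall>u\<in>B i. \<forall>v\<in>B i. u \<noteq> v \<longrightarrow> E u v))
    \<and> (\<forall>i<m. \<forall>j<m. i \<noteq> j \<longrightarrow> B i \<inter> B j = {} \<and> (\<forall>u\<in>B i. \<forall>v\<in>B j. \<not> E u v)))"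

end

theory Submission
  imports Defs
begin


lemma sum_fun_app: "(\<Sum>s\<in>S. f s) x = (\<Sum>s\<in>S. f s x)"
  by (induction S rule: infinite_finite_induct) auto

lemma vs_fscale: "vector_space (fscale :: 'k::field \<Rightarrow> ('a set \<Rightarrow> 'k) \<Rightarrow> ('a set \<Rightarrow> 'k))"
  by unfold_locales (auto simp: fscale_def fun_eq_iff algebra_simps)

interpretation fs: vector_space "fscale :: 'k::field \<Rightarrow> ('a set \<Rightarrow> 'k) \<Rightarrow> ('a set \<Rightarrow> 'k)"
  by (rule vs_fscale)

context vector_space begin

lemma dim_mono_fin:
  assumes "S \<subseteq> T" "T \<subseteq> span F" "finite F"
  shows "dim S \<le> dim T"
proof -
  obtain B where B: "B \<subseteq> S" "independent B" "S \<subseteq> span B" "card B = dim S"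
    using basis_exists by blast
  obtain C where C: "C \<subseteq> T" "independent C" "T \<subseteq> span C" "card C = dim T"
    using basis_exists by blast
  have "finite C" using independent_span_bound[OF assms(3) C(2)] C(1) assms(2) by auto
  moreover have "B \<subseteq> span C" using B(1) assms(1) C(3) by auto
  ultimately show ?thesis using independent_span_bound[of C B] B C by auto
qed

lemma fin_basis:
  assumes "S \<subseteq> span F" "finite F"
  obtains B where "B \<subseteq> S" "independent B" "S \<subseteq> span B" "card B = dim S" "finite B"
proof -
  obtain B where B: "B \<subseteq> S" "independent B" "S \<subseteq> span B" "card B = dim S"
    using basis_exists by blast
  have "finite B" using independent_span_bound[OF assms(2) B(2)] B(1) assms(1) by auto
  then show ?thesis using B that by blast
qed

lemma rank_ge:
  assumes lin: "Vector_Spaces.linear scale scale f" and W: "W \<subseteq> span F" "finite F"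
  shows "dim {x\<in>W. f x = 0} + dim (f ` W) \<le> dim W"
proof -
  interpret lf: Vector_Spaces.linear scale scale f by fact
  obtain K where K: "K \<subseteq> {x\<in>W. f x = 0}" "independent K" "{x\<in>W. f x = 0} \<subseteq> span K"
      "card K = dim {x\<in>W. f x = 0}" "finite K"
    using fin_basis[of "{x\<in>W. f x = 0}" F] W by auto
  obtain B where B: "K \<subseteq> B" "B \<subseteq> W" "independent B" "W \<subseteq> span B"
    using maximal_independent_subset_extend[of K W] K by auto
  have fB: "finite B" using independent_span_bound[OF W(2) B(3)] B(2) W(1) by auto
  have cB: "card B = dim W" using basis_card_eq_dim[OF B(2) B(4) B(3)] .
  have "f ` W \<subseteq> span (f ` B)"
    using lf.spans_image[OF B(4)] .
  also have "f ` B \<subseteq> insert 0 (f ` (B - K))" using K(1) by auto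
  then have "span (f ` B) \<subseteq> span (f ` (B - K))"
    by (metis span_insert_0 span_mono)
  finally have "dim (f ` W) \<le> card (f ` (B - K))"
    using dim_le_card fB by auto
  also have "\<dots> \<le> card (B - K)" using fB by (simp add: card_image_le)
  also have "\<dots> = card B - card K" using fB B(1) by (simp add: card_Diff_subset K(5))
  finally show ?thesis using cB K(4) card_mono[OF fB B(1)] by linarith
qed

lemma rank_le:
  assumes lin: "Vector_Spaces.linear scale scale f" and W: "W \<subseteq> span F" "finite F" "subspace W"
  shows "dim W \<le> dim {x\<in>W. f x = 0} + dim (f ` W)"
proof -
  interpret lf: Vector_Spaces.linear scale scale f by fact
  obtain K where K: "K \<subseteq> {x\<in>W. f x = 0}" "independent K" "{x\<in>W. f x = 0} \<subseteq> span K"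
      "card K = dim {x\<in>W. f x = 0}" "finite K"
    using fin_basis[of "{x\<in>W. f x = 0}" F] W by auto
  have "f ` W \<subseteq> span (f ` F)" using lf.spans_image[OF W(1)] .
  then obtain C where C: "C \<subseteq> f ` W" "independent C" "f ` W \<subseteq> span C"
      "card C = dim (f ` W)" "finite C"
    using fin_basis[of "f ` W" "f ` F"] W(2) by auto
  have "\<forall>c\<in>C. \<exists>w\<in>W. f w = c" using C(1) by auto
  then obtain g where g: "\<And>c. c \<in> C \<Longrightarrow> g c \<in> W \<and> f (g c) = c" by metis
  have "W \<subseteq> span (K \<union> g ` C)"
  proof
    fix x assume x: "x \<in> W"
    then have "f x \<in> span C" using C(3) by auto
    then obtain u where u: "f x = (\<Sum>c\<in>C. scale (u c) c)"
      using span_finite[OF C(5)] by auto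
    define y where "y = (\<Sum>c\<in>C. scale (u c) (g c))"
    have yW: "y \<in> W" unfolding y_def
      using g W(3) by (auto intro!: subspace_sum subspace_scale)
    have "f y = (\<Sum>c\<in>C. scale (u c) (f (g c)))" unfolding y_def
      by (simp add: lf.sum lf.scale)
    also have "\<dots> = f x" using u g by simp
    finally have fy: "f y = f x" .
    have "x - y \<in> {x\<in>W. f x = 0}" using x yW fy W(3)
      by (auto simp: lf.diff subspace_diff)
    then have "x - y \<in> span (K \<union> g ` C)" using K(3) span_mono[of K "K \<union> g ` C"] by auto
    moreover have "y \<in> span (K \<union> g ` C)" unfolding y_def
      by (intro span_sum span_scale span_base) auto
    ultimately have "(x - y) + y \<in> span (K \<union> g ` C)" by (rule span_add)
    then show "x \<in> span (K \<union> g ` C)" by simp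
  qed
  then have "dim W \<le> card (K \<union> g ` C)" using dim_le_card K(5) C(5) by auto
  also have "\<dots> \<le> card K + card (g ` C)" by (rule card_Un_le)
  also have "\<dots> \<le> card K + card C" using card_image_le[OF C(5)] by simp
  finally show ?thesis using K(4) C(4) by simp
qed

end


lemma faces_iff: "s \<in> faces V E k \<longleftrightarrow> s \<subseteq> V \<and> (\<forall>x\<in>s. \<forall>y\<in>s. \<not> E x y) \<and> card s = k"
  by (simp add: faces_def indep_def)

lemma finite_faces: "finite V \<Longrightarrow> finite (faces V E k)"
  by (rule finite_subset[of _ "Pow V"]) (auto simp: faces_iff)

lemma chains_iff: "f \<in> chains V E k \<longleftrightarrow> (\<forall>s. s \<notin> faces V E k \<longrightarrow> f s = 0)"
  by (auto simp: chains_def)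

definition eb :: "'a set \<Rightarrow> 'a set \<Rightarrow> 'k::field" where "eb s = (\<lambda>t. if t = s then 1 else 0)"

lemma chains_span:
  assumes "finite V"
  shows "(chains V E k :: ('a set \<Rightarrow> 'k::field) set) \<subseteq> fs.span (eb ` faces V E k)"
proof
  fix f :: "'a set \<Rightarrow> 'k" assume f: "f \<in> chains V E k"
  have "f = (\<Sum>s\<in>faces V E k. fscale (f s) (eb s))"
  proof
    fix t
    have "(\<Sum>s\<in>faces V E k. fscale (f s) (eb s)) t = (\<Sum>s\<in>faces V E k. (if t = s then f s else 0))"
      by (auto simp: sum_fun_app fscale_def eb_def intro!: sum.cong)
    also have "\<dots> = f t" using f finite_faces[OF assms] by (auto simp: chains_iff)
    finally show "f t = (\<Sum>s\<in>faces V E k. fscale (f s) (eb s)) t" by simp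
  qed
  also have "\<dots> \<in> fs.span (eb ` faces V E k)"
    by (intro fs.span_sum fs.span_scale fs.span_base) auto
  finally show "f \<in> fs.span (eb ` faces V E k)" .
qed

lemma subspace_chains: "fs.subspace (chains V E k :: ('a set \<Rightarrow> 'k::field) set)"
  by (auto simp: fs.subspace_def chains_iff fscale_def)

lemma linear_bdry: "Vector_Spaces.linear (fscale :: 'k::field \<Rightarrow> _) fscale (bdry V E k :: ('a::linorder set \<Rightarrow> 'k) \<Rightarrow> _)"
  unfolding Vector_Spaces.linear_iff
  by (auto simp: vs_fscale bdry_def fun_eq_iff fscale_def sum.distrib sum_distrib_left algebra_simps)

lemma bdry_chains: "bdry V E k f \<in> chains V E (k - 1)"
  by (auto simp: bdry_def chains_iff)

lemma bdry_0: "bdry V E 0 f = 0"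
  by (auto simp: bdry_def fun_eq_iff)

lemma subspace_Z: "fs.subspace {f \<in> (chains V E k :: ('a::linorder set \<Rightarrow> 'k::field) set). bdry V E k f = 0}"
proof -
  interpret l: Vector_Spaces.linear "fscale :: 'k \<Rightarrow> _" fscale "bdry V E k :: ('a set \<Rightarrow> 'k) \<Rightarrow> _"
    by (rule linear_bdry)
  have "{f \<in> (chains V E k :: ('a::linorder set \<Rightarrow> 'k::field) set). bdry V E k f = 0}
     = chains V E k \<inter> {f. bdry V E k f = 0}" by auto
  then show ?thesis using fs.subspace_inter[OF subspace_chains l.subspace_kernel] by simp
qed

lemma subspace_B: "fs.subspace (bdry V E k ` (chains V E k :: ('a::linorder set \<Rightarrow> 'k::field) set))"
proof -
  interpret l: Vector_Spaces.linear "fscale :: 'k \<Rightarrow> _" fscale "bdry V E k :: ('a set \<Rightarrow> 'k) \<Rightarrow> _"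
    by (rule linear_bdry)
  show ?thesis by (rule l.subspace_image[OF subspace_chains])
qed


definition prj :: "'a \<Rightarrow> ('a set \<Rightarrow> 'k) \<Rightarrow> ('a set \<Rightarrow> 'k::field)" where
  "prj v f = (\<lambda>s. if v \<in> s then f s else 0)"

definition eps :: "'a::linorder \<Rightarrow> 'a set \<Rightarrow> 'k::field" where
  "eps v t = (-1) ^ card {u\<in>t. v < u}"

definition psi :: "'a::linorder \<Rightarrow> ('a set \<Rightarrow> 'k) \<Rightarrow> ('a set \<Rightarrow> 'k::field)" where
  "psi v g = (\<lambda>t. if v \<notin> t then eps v t * g (insert v t) else 0)"

definition phi :: "'a::linorder \<Rightarrow> ('a set \<Rightarrow> 'k) \<Rightarrow> ('a set \<Rightarrow> 'k::field)" where
  "phi v h = (\<lambda>s. if v \<in> s then eps v (s - {v}) * h (s - {v}) else 0)"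

lemma linear_prj: "Vector_Spaces.linear (fscale :: 'k::field \<Rightarrow> _) fscale (prj v :: ('a set \<Rightarrow> 'k) \<Rightarrow> _)"
  unfolding Vector_Spaces.linear_iff
  by (auto simp: vs_fscale prj_def fun_eq_iff fscale_def)

lemma linear_psi: "Vector_Spaces.linear (fscale :: 'k::field \<Rightarrow> _) fscale (psi v :: ('a::linorder set \<Rightarrow> 'k) \<Rightarrow> _)"
  unfolding Vector_Spaces.linear_iff
  by (auto simp: vs_fscale psi_def fun_eq_iff fscale_def algebra_simps)

lemma eps_sq: "eps v t * eps v t = (1::'k::field)"
  by (simp add: eps_def power_mult_distrib[symmetric])

lemma chains_V1:
  assumes "v \<in> V"
  shows "chains (V - {v}) E k = {f \<in> chains V E k. prj v f = 0}"
proof (intro set_eqI iffI)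
  fix f assume f: "f \<in> chains (V - {v}) E k"
  then have "f \<in> chains V E k" by (auto simp: chains_iff faces_iff)
  moreover have "prj v f = 0" using f by (auto simp: chains_iff faces_iff prj_def fun_eq_iff)
  ultimately show "f \<in> {f \<in> chains V E k. prj v f = 0}" by simp
next
  fix f assume f: "f \<in> {f \<in> chains V E k. prj v f = 0}"
  show "f \<in> chains (V - {v}) E k" unfolding chains_iff
  proof (intro allI impI)
    fix s assume s: "s \<notin> faces (V - {v}) E k"
    show "f s = 0"
    proof (cases "v \<in> s")
      case True
      have "prj v f s = 0" using f by simp
      then show ?thesis using True by (simp add: prj_def)
    next
      case False then have "s \<notin> faces V E k" using s by (auto simp: faces_iff)
      then show ?thesis using f by (auto simp: chains_iff)
    qed
  qed
qed

lemma card_less_insert: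
  assumes "finite t" "v \<notin> t"
  shows "card {u \<in> insert v t. u < w} = (if v < w then Suc (card {u\<in>t. u < w}) else card {u\<in>t. u < w})"
proof -
  have "{u \<in> insert v t. u < w} = (if v < w then insert v {u\<in>t. u < w} else {u\<in>t. u < w})" by auto
  then show ?thesis using assms by auto
qed

lemma eps_insert:
  assumes "finite t" "w \<notin> t"
  shows "eps v (insert w t) = (if v < w then - eps v t else (eps v t :: 'k::field))"
proof -
  have "{u \<in> insert w t. v < u} = (if v < w then insert w {u\<in>t. v < u} else {u\<in>t. v < u})" by auto
  then show ?thesis using assms by (auto simp: eps_def)
qed

lemma bdry_V1:
  assumes fin: "finite V" and "v \<in> V" and f: "f \<in> chains (V - {v}) E k"
  shows "bdry (V - {v}) E k f = bdry V E k f"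
proof
  fix t
  show "bdry (V - {v}) E k f t = bdry V E k f t"
  proof (cases "k = 0")
    case True then show ?thesis by (simp add: bdry_def)
  next
    case k: False
    show ?thesis
    proof (cases "t \<in> faces (V - {v}) E (k - 1)")
      case True
      then have t: "t \<in> faces V E (k - 1)" "v \<notin> t" by (auto simp: faces_iff)
      let ?S = "{w \<in> V - t. insert w t \<in> faces V E k}"
      let ?S' = "{w \<in> V - {v} - t. insert w t \<in> faces (V - {v}) E k}"
      have S': "?S' = ?S - {v}" using t by (auto simp: faces_iff)
      have "(\<Sum>w\<in>?S. (-1) ^ card {u \<in> t. u < w} * f (insert w t))
          = (\<Sum>w\<in>?S'. (-1) ^ card {u \<in> t. u < w} * f (insert w t))"
        unfolding S' using f fin by (intro sum.mono_neutral_right) (auto simp: chains_iff faces_iff)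
      then show ?thesis using True t k by (simp add: bdry_def)
    next
      case False
      have "(\<Sum>w\<in>{w \<in> V - t. insert w t \<in> faces V E k}. (-1) ^ card {u \<in> t. u < w} * f (insert w t)) = 0"
        if t: "t \<in> faces V E (k - 1)"
      proof -
        have "v \<in> t" using t False by (auto simp: faces_iff)
        have "f (insert w t) = 0" for w
        proof -
          have "insert w t \<notin> faces (V - {v}) E k" using \<open>v \<in> t\<close> by (auto simp: faces_iff)
          then show ?thesis using f by (simp add: chains_iff)
        qed
        then show ?thesis by simp
      qed
      then show ?thesis using False by (auto simp: bdry_def)
    qed
  qed
qed


locale gr =
  fixes V :: "'a::linorder set" and E :: "'a \<Rightarrow> 'a \<Rightarrow> bool"
  assumes fin: "finite V" and sym: "\<And>x y. E x y \<Longrightarrow> E y x" and irr: "\<And>x. \<not> E x x"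
begin

lemma psi_chains:
  assumes v: "v \<in> V" and f: "f \<in> chains V E k"
  shows "psi v (prj v f) \<in> chains {u \<in> V. u \<noteq> v \<and> \<not> E v u} E (k - 1)"
  unfolding chains_iff
proof (intro allI impI)
  fix t assume t: "t \<notin> faces {u \<in> V. u \<noteq> v \<and> \<not> E v u} E (k - 1)"
  show "psi v (prj v f) t = 0"
  proof (cases "v \<in> t")
    case True then show ?thesis by (simp add: psi_def)
  next
    case False
    have "insert v t \<notin> faces V E k"
    proof
      assume a: "insert v t \<in> faces V E k"
      then have "finite t" using fin by (auto simp: faces_iff intro: finite_subset)
      then have "t \<in> faces {u \<in> V. u \<noteq> v \<and> \<not> E v u} E (k - 1)"
        using a False by (auto simp: faces_iff)
      then show False using t by simp
    qed
    then show ?thesis using f False by (simp add: psi_def prj_def chains_iff)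
  qed
qed

lemma psi_inj:
  assumes x: "\<And>s. v \<notin> s \<Longrightarrow> x s = 0" and p: "psi v x = (0::'a set \<Rightarrow> 'k::field)"
  shows "x = 0"
proof
  fix s
  show "x s = 0 s"
  proof (cases "v \<in> s")
    case True
    have "psi v x (s - {v}) = 0" using p by simp
    then have "eps v (s - {v}) * x s = 0" using True by (simp add: psi_def insert_absorb)
    moreover have "eps v (s - {v}) \<noteq> (0::'k)" by (simp add: eps_def)
    ultimately show ?thesis by simp
  next
    case False then show ?thesis using x by simp
  qed
qed

lemma phi_prop:
  assumes v: "v \<in> V" and k: "k \<ge> 1" and h: "h \<in> chains {u \<in> V. u \<noteq> v \<and> \<not> E v u} E (k - 1)"
  shows "phi v h \<in> chains V E k" "psi v (prj v (phi v h)) = (h :: 'a set \<Rightarrow> 'k::field)"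
proof -
  show "phi v h \<in> chains V E k" unfolding chains_iff
  proof (intro allI impI)
    fix s assume s: "s \<notin> faces V E k"
    show "phi v h s = 0"
    proof (cases "v \<in> s")
      case True
      have "s - {v} \<notin> faces {u \<in> V. u \<noteq> v \<and> \<not> E v u} E (k - 1)"
      proof
        assume a: "s - {v} \<in> faces {u \<in> V. u \<noteq> v \<and> \<not> E v u} E (k - 1)"
        have "s - {v} \<subseteq> V" using a by (auto simp: faces_iff)
        then have "finite (s - {v})" using fin finite_subset by blast
        then have "finite s" by simp
        then have "card s = Suc (card (s - {v}))" using True by (metis card_Suc_Diff1)
        moreover have "s \<subseteq> V" using a True v by (auto simp: faces_iff)
        moreover have "\<forall>x\<in>s. \<forall>y\<in>s. \<not> E x y"
        proof (intro ballI)
          fix x y assume xy: "x \<in> s" "y \<in> s"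
          have A: "\<forall>x\<in>s - {v}. \<forall>y\<in>s - {v}. \<not> E x y" "\<forall>x\<in>s - {v}. \<not> E v x"
            using a by (auto simp: faces_iff)
          show "\<not> E x y"
          proof (cases "x = v"; cases "y = v")
            assume "x = v" "y = v" then show ?thesis using irr by simp
          next
            assume "x = v" "y \<noteq> v" then show ?thesis using A xy by auto
          next
            assume "x \<noteq> v" "y = v" then show ?thesis using A xy sym by blast
          next
            assume "x \<noteq> v" "y \<noteq> v" then show ?thesis using A xy by auto
          qed
        qed
        moreover have "card (s - {v}) = k - 1" using a by (auto simp: faces_iff)
        ultimately have "s \<in> faces V E k" using k by (auto simp: faces_iff)
        then show False using s by simp
      qed
      then show ?thesis using h True by (simp add: phi_def chains_iff)
    next
      case False then show ?thesis by (simp add: phi_def)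
    qed
  qed
  show "psi v (prj v (phi v h)) = h"
  proof
    fix t
    show "psi v (prj v (phi v h)) t = h t"
    proof (cases "v \<in> t")
      case True
      then have "t \<notin> faces {u \<in> V. u \<noteq> v \<and> \<not> E v u} E (k - 1)" by (auto simp: faces_iff)
      then show ?thesis using True h by (simp add: psi_def chains_iff)
    next
      case False
      then have "insert v t - {v} = t" by auto
      then show ?thesis using False by (simp add: psi_def prj_def phi_def eps_sq mult.assoc[symmetric])
    qed
  qed
qed

lemma chain_map:
  assumes v: "v \<in> V" and k: "k \<ge> 1"
  shows "psi v (prj v (bdry V E k f)) = bdry {u \<in> V. u \<noteq> v \<and> \<not> E v u} E (k - 1) (psi v (prj v (f :: 'a set \<Rightarrow> 'k::field)))"
proof
  fix t
  define V2 where "V2 = {u \<in> V. u \<noteq> v \<and> \<not> E v u}"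
  show "psi v (prj v (bdry V E k f)) t = bdry V2 E (k - 1) (psi v (prj v f)) t"
  proof (cases "v \<in> t")
    case True
    then have "t \<notin> faces V2 E (k - 1 - 1)" by (auto simp: faces_iff V2_def)
    then show ?thesis using True by (simp add: psi_def bdry_def)
  next
    case vt: False
    have L: "psi v (prj v (bdry V E k f)) t = eps v t * bdry V E k f (insert v t)"
      using vt by (simp add: psi_def prj_def)
    show ?thesis
    proof (cases "k - 1 = 0 \<or> t \<notin> faces V2 E (k - 1 - 1)")
      case True
      have "insert v t \<notin> faces V E (k - 1)"
      proof
        assume a: "insert v t \<in> faces V E (k - 1)"
        have "finite (insert v t)" using a fin by (auto simp: faces_iff intro: finite_subset)
        then have ft: "finite t" by simp
        have c: "card (insert v t) = Suc (card t)" using ft vt by simp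
        show False
        proof (cases "k - 1 = 0")
          case True then show False using a c by (simp add: faces_iff)
        next
          case False
          then have "t \<notin> faces V2 E (k - 1 - 1)" using \<open>k - 1 = 0 \<or> _\<close> by simp
          moreover have "t \<in> faces V2 E (k - 1 - 1)"
            using a c vt by (auto simp: faces_iff V2_def)
          ultimately show False by simp
        qed
      qed
      then have "bdry V E k f (insert v t) = 0" by (simp add: bdry_def)
      then show ?thesis using L True by (auto simp: bdry_def)
    next
      case False
      then have k2: "k \<ge> 2" and tf0: "t \<in> faces V2 E (k - 1 - 1)" by auto
      have "k - 1 - 1 = k - 2" by simp
      then have tf: "t \<in> faces V2 E (k - 2)" using tf0 by metis
      have ft: "finite t" using tf fin by (auto simp: faces_iff V2_def intro: finite_subset)
      have ct: "card t = k - 2" using tf by (simp add: faces_iff)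
      have tV2: "t \<subseteq> V2" using tf by (simp add: faces_iff)
      have tind: "\<forall>x\<in>t. \<forall>y\<in>t. \<not> E x y" using tf by (simp add: faces_iff)
      have ivt: "insert v t \<in> faces V E (k - 1)"
        using tf vt ft k2 v irr sym by (auto simp: faces_iff V2_def)
      define S where "S = {w \<in> V2 - t. insert w t \<in> faces V2 E (k - 1)}"
      have S1: "{w \<in> V - insert v t. insert w (insert v t) \<in> faces V E k} = S"
      proof (intro set_eqI iffI)
        fix w assume "w \<in> {w \<in> V - insert v t. insert w (insert v t) \<in> faces V E k}"
        then have w: "w \<in> V" "w \<noteq> v" "w \<notin> t" "insert w (insert v t) \<in> faces V E k" by auto
        have "\<not> E v w" using w(4) by (auto simp: faces_iff)
        then have "w \<in> V2" using w by (simp add: V2_def)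
        moreover have "card (insert w t) = k - 1" using w ft vt ct k2 by simp
        ultimately show "w \<in> S" using w tV2 tind unfolding S_def by (auto simp: faces_iff)
      next
        fix w assume "w \<in> S"
        then have w: "w \<in> V2" "w \<notin> t" "insert w t \<in> faces V2 E (k - 1)" by (auto simp: S_def)
        have "card (insert w (insert v t)) = k" using w ft vt ct k2 by (auto simp: V2_def)
        moreover have "insert w (insert v t) \<subseteq> V" using w tV2 v by (auto simp: V2_def)
        moreover have "\<forall>x\<in>insert w (insert v t). \<forall>y\<in>insert w (insert v t). \<not> E x y"
        proof (intro ballI)
          fix x y assume xy: "x \<in> insert w (insert v t)" "y \<in> insert w (insert v t)"
          have A: "\<forall>x\<in>insert w t. \<forall>y\<in>insert w t. \<not> E x y" "\<forall>x\<in>insert w t. \<not> E v x"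
            using w tV2 by (auto simp: faces_iff V2_def)
          show "\<not> E x y"
          proof (cases "x = v"; cases "y = v")
            assume "x = v" "y = v" then show ?thesis using irr by simp
          next
            assume "x = v" "y \<noteq> v" then show ?thesis using A xy by auto
          next
            assume "x \<noteq> v" "y = v" then show ?thesis using A xy sym by blast
          next
            assume "x \<noteq> v" "y \<noteq> v" then show ?thesis using A xy by auto
          qed
        qed
        ultimately show "w \<in> {w \<in> V - insert v t. insert w (insert v t) \<in> faces V E k}"
          using w vt by (auto simp: faces_iff V2_def)
      qed
      have k1: "k - 1 - 1 = k - 2" "k \<noteq> 0" "k - 1 \<noteq> 0" using k2 by auto
      have "bdry V E k f (insert v t) = (\<Sum>w\<in>{w \<in> V - insert v t. insert w (insert v t) \<in> faces V E k}. (-1) ^ card {u \<in> insert v t. u < w} * f (insert w (insert v t)))"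
        using ivt k1 by (simp add: bdry_def)
      also have "\<dots> = (\<Sum>w\<in>S. (-1) ^ card {u \<in> insert v t. u < w} * f (insert w (insert v t)))"
        by (simp only: S1)
      finally have "bdry V E k f (insert v t) = (\<Sum>w\<in>S. (-1) ^ card {u \<in> insert v t. u < w} * f (insert w (insert v t)))" .
      then have L2: "psi v (prj v (bdry V E k f)) t = (\<Sum>w\<in>S. eps v t * ((-1) ^ card {u \<in> insert v t. u < w} * f (insert w (insert v t))))"
        using L by (simp add: sum_distrib_left)
      have R: "bdry V2 E (k - 1) (psi v (prj v f)) t = (\<Sum>w\<in>S. (-1) ^ card {u \<in> t. u < w} * psi v (prj v f) (insert w t))"
        unfolding S_def using tf k1 by (simp add: bdry_def)
      show ?thesis unfolding L2 R
      proof (rule sum.cong[OF refl])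
        fix w assume "w \<in> S"
        then have w: "w \<noteq> v" "w \<notin> t" by (auto simp: S_def V2_def)
        have e1: "psi v (prj v f) (insert w t) = eps v (insert w t) * f (insert w (insert v t))"
          using w vt by (simp add: psi_def prj_def insert_commute)
        show "eps v t * ((-1) ^ card {u \<in> insert v t. u < w} * f (insert w (insert v t))) =
          (-1) ^ card {u \<in> t. u < w} * psi v (prj v f) (insert w t)"
          unfolding e1 eps_insert[OF ft w(2)] card_less_insert[OF ft vt] by auto
      qed
    qed
  qed
qed

end


context gr begin

lemma dim_zero_set: "fs.dim (S :: ('a set \<Rightarrow> 'k::field) set) = 0" if "S \<subseteq> {0}"
proof -
  have "fs.dim S \<le> card ({} :: ('a set \<Rightarrow> 'k) set)"
    using that by (intro fs.dim_le_card) auto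
  then show ?thesis by simp
qed

lemma betti_step:
  assumes v: "v \<in> V"
  shows "red_betti TYPE('k::field) V E k \<le> red_betti TYPE('k) (V - {v}) E k +
     (if k = 0 then 0 else red_betti TYPE('k) {u \<in> V. u \<noteq> v \<and> \<not> E v u} E (k - 1))"
proof -
  define V1 where "V1 = V - {v}"
  define V2 where "V2 = {u \<in> V. u \<noteq> v \<and> \<not> E v u}"
  define Z :: "('a set \<Rightarrow> 'k) set" where "Z = {f \<in> chains V E k. bdry V E k f = 0}"
  define B :: "('a set \<Rightarrow> 'k) set" where "B = bdry V E (Suc k) ` chains V E (Suc k)"
  define ZA :: "('a set \<Rightarrow> 'k) set" where "ZA = {f \<in> chains V1 E k. bdry V1 E k f = 0}"
  define BA :: "('a set \<Rightarrow> 'k) set" where "BA = bdry V1 E (Suc k) ` chains V1 E (Suc k)"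
  define ZQ :: "('a set \<Rightarrow> 'k) set" where "ZQ = {f \<in> chains V2 E (k - 1). bdry V2 E (k - 1) f = 0}"
  define BQ :: "('a set \<Rightarrow> 'k) set" where "BQ = bdry V2 E (Suc (k - 1)) ` chains V2 E (Suc (k - 1))"
  define F :: "('a set \<Rightarrow> 'k) set" where "F = eb ` faces V E k"
  have finF: "finite F" unfolding F_def using finite_faces[OF fin] by simp
  have finV2: "finite V2" using fin by (simp add: V2_def)
  have chF: "chains V E k \<subseteq> fs.span F" unfolding F_def by (rule chains_span[OF fin])
  have ZF: "Z \<subseteq> fs.span F" using chF by (auto simp: Z_def)
  have BF: "B \<subseteq> fs.span F" using chF bdry_chains[of V E "Suc k"] by (auto simp: B_def)
  have prjch: "prj v f \<in> chains V E k" if "f \<in> chains V E k" for f :: "'a set \<Rightarrow> 'k"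
    using that by (auto simp: chains_iff prj_def)
  interpret lp: Vector_Spaces.linear "fscale :: 'k \<Rightarrow> _" fscale "prj v :: ('a set \<Rightarrow> 'k) \<Rightarrow> _"
    by (rule linear_prj)
  interpret lpsi: Vector_Spaces.linear "fscale :: 'k \<Rightarrow> _" fscale "psi v :: ('a set \<Rightarrow> 'k) \<Rightarrow> _"
    by (rule linear_psi)
  have subZ: "fs.subspace Z" unfolding Z_def by (rule subspace_Z)
  have subB: "fs.subspace B" unfolding B_def by (rule subspace_B)
  have d1: "fs.dim Z \<le> fs.dim {x\<in>Z. prj v x = 0} + fs.dim (prj v ` Z)"
    by (rule fs.rank_le[OF linear_prj ZF finF subZ])
  have d2: "{x\<in>Z. prj v x = 0} = ZA"
  proof (intro set_eqI iffI)
    fix x assume "x \<in> {x\<in>Z. prj v x = 0}"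
    then have x: "x \<in> chains V E k" "bdry V E k x = 0" "prj v x = 0" by (auto simp: Z_def)
    then have x1: "x \<in> chains V1 E k" using chains_V1[OF v] by (auto simp: V1_def)
    have "bdry V1 E k x = bdry V E k x" using bdry_V1[OF fin v x1[unfolded V1_def]] by (simp add: V1_def)
    then show "x \<in> ZA" using x x1 by (auto simp: ZA_def)
  next
    fix x assume "x \<in> ZA"
    then have x: "x \<in> chains V1 E k" "bdry V1 E k x = 0" by (auto simp: ZA_def)
    have "bdry V1 E k x = bdry V E k x" using bdry_V1[OF fin v x(1)[unfolded V1_def]] by (simp add: V1_def)
    then show "x \<in> {x\<in>Z. prj v x = 0}" using chains_V1[OF v] x
      by (auto simp: Z_def V1_def)
  qed
  have d4: "fs.dim {x\<in>B. prj v x = 0} + fs.dim (prj v ` B) \<le> fs.dim B"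
    by (rule fs.rank_ge[OF linear_prj BF finF])
  have d5: "fs.dim BA \<le> fs.dim {x\<in>B. prj v x = 0}"
  proof (rule fs.dim_mono_fin[OF _ _ finF])
    show "BA \<subseteq> {x\<in>B. prj v x = 0}"
    proof
      fix x assume "x \<in> BA"
      then obtain g where g: "g \<in> chains V1 E (Suc k)" "x = bdry V1 E (Suc k) g" by (auto simp: BA_def)
      have "g \<in> chains V E (Suc k)" using g chains_V1[OF v] by (auto simp: V1_def)
      moreover have "x = bdry V E (Suc k) g" using g bdry_V1[OF fin v] by (simp add: V1_def)
      moreover have "prj v x = 0" using bdry_chains[of V1 E "Suc k" g] g chains_V1[OF v]
        by (auto simp: V1_def)
      ultimately show "x \<in> {x\<in>B. prj v x = 0}" by (auto simp: B_def)
    qed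
    show "{x\<in>B. prj v x = 0} \<subseteq> fs.span F" using BF by auto
  qed
  show ?thesis
  proof (cases "k = 0")
    case True
    have "prj v ` Z \<subseteq> {0}"
    proof
      fix y assume "y \<in> prj v ` Z"
      then obtain x where x: "x \<in> chains V E 0" "y = prj v x" using True by (auto simp: Z_def)
      have "y s = 0" for s
      proof (cases "v \<in> s")
        case True then have "s \<notin> faces V E 0" using fin by (auto simp: faces_iff card_eq_0_iff dest: finite_subset)
        then show ?thesis using x True by (simp add: prj_def chains_iff)
      next
        case False then show ?thesis using x by (simp add: prj_def)
      qed
      then show "y \<in> {0}" by auto
    qed
    then have "fs.dim (prj v ` Z) = 0" by (rule dim_zero_set)
    then have "fs.dim Z \<le> fs.dim ZA" "fs.dim BA \<le> fs.dim B" using d1 d2 d4 d5 by auto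
    then show ?thesis using True
      by (simp add: red_betti_def Z_def B_def ZA_def BA_def V1_def)
  next
    case False
    then have k1: "k \<ge> 1" by simp
    have chQ: "chains V2 E (k - 1) \<subseteq> fs.span (eb ` faces V2 E (k - 1))" by (rule chains_span[OF finV2])
    have finQ: "finite (eb ` faces V2 E (k - 1))" using finite_faces[OF finV2] by simp
    have d3: "fs.dim (prj v ` Z) \<le> fs.dim ZQ"
    proof -
      have W: "prj v ` Z \<subseteq> fs.span F"
      proof
        fix y assume "y \<in> prj v ` Z"
        then obtain f where "f \<in> chains V E k" "y = prj v f" by (auto simp: Z_def)
        then have "y \<in> chains V E k" using prjch by simp
        then show "y \<in> fs.span F" using chF by blast
      qed
      have subW: "fs.subspace (prj v ` Z)" by (rule lp.subspace_image[OF subZ])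
      have "fs.dim (prj v ` Z) \<le> fs.dim {x\<in>prj v ` Z. psi v x = 0} + fs.dim (psi v ` prj v ` Z)"
        by (rule fs.rank_le[OF linear_psi W finF subW])
      moreover have "fs.dim {x\<in>prj v ` Z. psi v x = 0} = 0"
      proof (rule dim_zero_set)
        show "{x\<in>prj v ` Z. psi v x = 0} \<subseteq> {0}"
      proof
        fix x assume "x \<in> {x\<in>prj v ` Z. psi v x = 0}"
        then obtain f where "x = prj v f" "psi v x = 0" by auto
        then have "x = 0" by (intro psi_inj[of v x]) (auto simp: prj_def)
        then show "x \<in> {0}" by simp
      qed
      qed
      moreover have "fs.dim (psi v ` prj v ` Z) \<le> fs.dim ZQ"
      proof (rule fs.dim_mono_fin[OF _ _ finQ])
        show "psi v ` prj v ` Z \<subseteq> ZQ"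
        proof
          fix y assume "y \<in> psi v ` prj v ` Z"
          then obtain f where f: "f \<in> chains V E k" "bdry V E k f = 0" "y = psi v (prj v f)"
            by (auto simp: Z_def)
          have "y \<in> chains V2 E (k - 1)" using psi_chains[OF v f(1)] f(3) by (simp add: V2_def)
          moreover have "bdry V2 E (k - 1) y = 0"
          proof -
            have "prj v (0::'a set \<Rightarrow> 'k) = 0" "psi v (0::'a set \<Rightarrow> 'k) = 0"
              by (auto simp: prj_def psi_def fun_eq_iff)
            then show ?thesis using chain_map[OF v k1, of f] f by (simp add: V2_def)
          qed
          ultimately show "y \<in> ZQ" by (simp add: ZQ_def)
        qed
        show "ZQ \<subseteq> fs.span (eb ` faces V2 E (k - 1))" using chQ by (auto simp: ZQ_def)
      qed
      ultimately show ?thesis by linarith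
    qed
    have d6: "fs.dim BQ \<le> fs.dim (prj v ` B)"
    proof -
      have W: "prj v ` B \<subseteq> fs.span F"
      proof
        fix y assume "y \<in> prj v ` B"
        then obtain f where "f \<in> B" "y = prj v f" by auto
        then have "f \<in> chains V E k" using bdry_chains[of V E "Suc k"] by (auto simp: B_def)
        then have "y \<in> chains V E k" using prjch \<open>y = prj v f\<close> by simp
        then show "y \<in> fs.span F" using chF by blast
      qed
      have eq: "psi v ` prj v ` B = BQ"
      proof (intro set_eqI iffI)
        fix y assume "y \<in> psi v ` prj v ` B"
        then obtain g where g: "g \<in> chains V E (Suc k)" "y = psi v (prj v (bdry V E (Suc k) g))"
          by (auto simp: B_def)
        have "y = bdry V2 E k (psi v (prj v g))" using chain_map[OF v, of "Suc k" g] g by (simp add: V2_def)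
        moreover have "psi v (prj v g) \<in> chains V2 E k" using psi_chains[OF v g(1)] by (simp add: V2_def)
        ultimately show "y \<in> BQ" using k1 by (auto simp: BQ_def)
      next
        fix y assume "y \<in> BQ"
        then obtain h where h: "h \<in> chains V2 E k" "y = bdry V2 E k h" using k1 by (auto simp: BQ_def)
        have h': "h \<in> chains {u \<in> V. u \<noteq> v \<and> \<not> E v u} E (Suc k - 1)" using h by (simp add: V2_def)
        have p1: "phi v h \<in> chains V E (Suc k)" and p2: "psi v (prj v (phi v h)) = h"
          using phi_prop[OF v _ h'] by auto
        have "y = psi v (prj v (bdry V E (Suc k) (phi v h)))"
          using chain_map[OF v, of "Suc k" "phi v h"] p2 h by (simp add: V2_def)
        then show "y \<in> psi v ` prj v ` B" using p1 by (auto simp: B_def)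
      qed
      have "fs.dim {x\<in>prj v ` B. psi v x = 0} + fs.dim (psi v ` prj v ` B) \<le> fs.dim (prj v ` B)"
        by (rule fs.rank_ge[OF linear_psi W finF])
      then show ?thesis using eq by simp
    qed
    have A: "fs.dim Z \<le> fs.dim ZA + fs.dim ZQ" "fs.dim BA + fs.dim BQ \<le> fs.dim B"
      using d1 d2 d3 d4 d5 d6 by auto
    have "red_betti TYPE('k) V E k = fs.dim Z - fs.dim B" by (simp add: red_betti_def Z_def B_def)
    moreover have "red_betti TYPE('k) (V - {v}) E k = fs.dim ZA - fs.dim BA"
      by (simp add: red_betti_def ZA_def BA_def V1_def)
    moreover have "red_betti TYPE('k) {u \<in> V. u \<noteq> v \<and> \<not> E v u} E (k - 1) = fs.dim ZQ - fs.dim BQ"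
      by (simp add: red_betti_def ZQ_def BQ_def V2_def)
    ultimately show ?thesis using A False by simp
  qed
qed

end


definition sig :: "'a::linorder \<Rightarrow> 'a set \<Rightarrow> 'k::field" where
  "sig v t = (-1) ^ card {u\<in>t. u < v}"

definition hom :: "'a::linorder \<Rightarrow> ('a set \<Rightarrow> 'k) \<Rightarrow> ('a set \<Rightarrow> 'k::field)" where
  "hom v f = (\<lambda>s. if v \<in> s then sig v (s - {v}) * f (s - {v}) else 0)"

lemma sig_insert:
  assumes "finite t" "w \<notin> t"
  shows "sig v (insert w t) = (if w < v then - sig v t else (sig v t :: 'k::field))"
proof -
  have "{u \<in> insert w t. u < v} = (if w < v then insert w {u\<in>t. u < v} else {u\<in>t. u < v})" by auto
  then show ?thesis using assms by (auto simp: sig_def)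
qed

lemma sig_sq: "sig v t * sig v t = (1::'k::field)"
  by (simp add: sig_def power_mult_distrib[symmetric])

context gr begin

lemma ins_face_iso:
  assumes v: "v \<in> V" and iso: "\<And>u. u \<in> V \<Longrightarrow> \<not> E v u" and s: "s \<in> faces V E j" "v \<notin> s"
  shows "insert v s \<in> faces V E (Suc j)"
proof -
  have iso2: "\<And>u. u \<in> V \<Longrightarrow> \<not> E u v" using iso sym by blast
  have "finite s" using s fin by (auto simp: faces_iff intro: finite_subset)
  then show ?thesis using s v iso iso2 by (auto simp: faces_iff)
qed

lemma homotopy:
  assumes v: "v \<in> V" and iso: "\<And>u. u \<in> V \<Longrightarrow> \<not> E v u" and f: "f \<in> chains V E k"
  shows "bdry V E (Suc k) (hom v f) t + hom v (bdry V E k f) t = (f t :: 'k::field)"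
proof -
  have iso2: "\<And>u. u \<in> V \<Longrightarrow> \<not> E u v" using iso sym by blast
  have fint: "finite t" if "t \<in> faces V E j" for t j using that fin by (auto simp: faces_iff intro: finite_subset)
  have ins_face: "insert v s \<in> faces V E (Suc j)" if "s \<in> faces V E j" "v \<notin> s" for s j
    using that fint[OF that(1)] v iso iso2 by (auto simp: faces_iff)
  show ?thesis
  proof (cases "t \<in> faces V E k")
    case False
    have f0: "f t = 0" using f False by (simp add: chains_iff)
    have b1: "bdry V E (Suc k) (hom v f) t = 0" using False by (simp add: bdry_def)
    have b2: "hom v (bdry V E k f) t = 0"
    proof (cases "v \<in> t \<and> k \<noteq> 0")
      case True
      have "t - {v} \<notin> faces V E (k - 1)"
      proof
        assume a: "t - {v} \<in> faces V E (k - 1)"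
        have "insert v (t - {v}) \<in> faces V E (Suc (k - 1))" by (rule ins_face[OF a]) simp
        then have "t \<in> faces V E k" using True by (simp add: insert_absorb)
        then show False using False by simp
      qed
      then show ?thesis by (simp add: hom_def bdry_def)
    next
      case False then show ?thesis by (auto simp: hom_def bdry_def)
    qed
    show ?thesis using f0 b1 b2 by simp
  next
    case tf: True
    have ft: "finite t" using fint[OF tf] .
    define S1 where "S1 = {w \<in> V - t. insert w t \<in> faces V E (Suc k)}"
    have b1: "bdry V E (Suc k) (hom v f) t = (\<Sum>w\<in>S1. (-1) ^ card {u \<in> t. u < w} * hom v f (insert w t))"
      unfolding S1_def using tf by (simp add: bdry_def)
    have finS1: "finite S1" using fin by (simp add: S1_def)
    show ?thesis
    proof (cases "v \<in> t")
      case False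
      have b2: "hom v (bdry V E k f) t = 0" using False by (simp add: hom_def)
      have vS1: "v \<in> S1" using ins_face[OF tf False] v False by (simp add: S1_def)
      have "(\<Sum>w\<in>S1. (-1) ^ card {u \<in> t. u < w} * hom v f (insert w t))
          = (-1) ^ card {u \<in> t. u < v} * hom v f (insert v t)"
      proof -
        have "(\<Sum>w\<in>S1 - {v}. (-1) ^ card {u \<in> t. u < w} * hom v f (insert w t)) = (0::'k)"
          using False by (intro sum.neutral) (auto simp: hom_def)
        then show ?thesis using sum.remove[OF finS1 vS1, of "\<lambda>w. (-1) ^ card {u \<in> t. u < w} * hom v f (insert w t)"]
          by simp
      qed
      also have "\<dots> = f t" using False
        by (simp add: hom_def sig_def mult.assoc[symmetric] power_mult_distrib[symmetric])
      finally show ?thesis using b1 b2 by simp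
    next
      case True
      define s where "s = t - {v}"
      have ts: "t = insert v s" "v \<notin> s" using True by (auto simp: s_def)
      have fs: "finite s" using ft by (simp add: s_def)
      have k1: "k \<ge> 1" using tf True ft by (cases k) (auto simp: faces_iff)
      have sf: "s \<in> faces V E (k - 1)" using tf ts fs by (auto simp: faces_iff)
      define S2 where "S2 = {w \<in> V - s. insert w s \<in> faces V E k}"
      have S2: "S2 = insert v S1"
      proof (intro set_eqI iffI)
        fix w assume w: "w \<in> S2"
        show "w \<in> insert v S1"
        proof (cases "w = v")
          case False
          have "insert w s \<in> faces V E k" "w \<in> V" "w \<notin> s" using w by (auto simp: S2_def)
          then have "insert v (insert w s) \<in> faces V E (Suc k)" using ins_face[of "insert w s" k] ts False by simp
          then show ?thesis using False ts \<open>w \<in> V\<close> \<open>w \<notin> s\<close> by (auto simp: S1_def insert_commute)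
        qed simp
      next
        fix w assume w: "w \<in> insert v S1"
        show "w \<in> S2"
        proof (cases "w = v")
          case True then show ?thesis using tf ts v by (simp add: S2_def)
        next
          case False
          then have w': "w \<in> V" "w \<notin> t" "insert w t \<in> faces V E (Suc k)" using w by (auto simp: S1_def)
          have "insert w s \<subseteq> insert w t" using ts by auto
          then have "insert w s \<in> faces V E k"
            using w' ts fs False by (auto simp: faces_iff insert_commute)
          then show ?thesis using w' ts by (auto simp: S2_def)
        qed
      qed
      have vS1: "v \<notin> S1" using True by (simp add: S1_def)
      have b2: "hom v (bdry V E k f) t = sig v s * (\<Sum>w\<in>S2. (-1) ^ card {u \<in> s. u < w} * f (insert w s))"
      proof -
        have "bdry V E k f s = (\<Sum>w\<in>S2. (-1) ^ card {u \<in> s. u < w} * f (insert w s))"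
          unfolding S2_def using sf k1 by (simp add: bdry_def)
        then show ?thesis using True by (simp add: hom_def s_def)
      qed
      have b2': "hom v (bdry V E k f) t = f t + (\<Sum>w\<in>S1. sig v s * ((-1) ^ card {u \<in> s. u < w} * f (insert w s)))"
      proof -
        have cc: "(-1::'k)^n * (-1)^n * x = x" for n x by (simp add: power_mult_distrib[symmetric])
        show ?thesis
        unfolding b2 S2 using finS1 vS1 ts
        by (simp add: sum_distrib_left sig_def distrib_left mult.assoc[symmetric] cc)
      qed
      have b1': "bdry V E (Suc k) (hom v f) t = (\<Sum>w\<in>S1. - (sig v s * ((-1) ^ card {u \<in> s. u < w} * f (insert w s))))"
        unfolding b1
      proof (rule sum.cong[OF refl])
        fix w assume "w \<in> S1"
        then have w: "w \<notin> t" "w \<noteq> v" "w \<notin> s" using ts by (auto simp: S1_def)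
        have "insert w t - {v} = insert w s" using ts w by auto
        then have e: "hom v f (insert w t) = sig v (insert w s) * f (insert w s)" by (simp add: hom_def ts)
        have c: "card {u \<in> t. u < w} = (if v < w then Suc (card {u\<in>s. u < w}) else card {u\<in>s. u < w})"
          unfolding ts(1) by (rule card_less_insert[OF fs ts(2)])
        show "(-1) ^ card {u \<in> t. u < w} * hom v f (insert w t) = - (sig v s * ((-1) ^ card {u \<in> s. u < w} * f (insert w s)))"
          unfolding e c sig_insert[OF fs w(3)] using w(2) by (cases "v < w") (auto simp: not_less_iff_gr_or_eq)
      qed
      show ?thesis unfolding b1' b2' by (simp add: sum_negf)
    qed
  qed
qed

lemma betti_isolated:
  assumes v: "v \<in> V" and iso: "\<And>u. u \<in> V \<Longrightarrow> \<not> E v u"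
  shows "red_betti TYPE('k::field) V E k = 0"
proof -
  define Z :: "('a set \<Rightarrow> 'k) set" where "Z = {f \<in> chains V E k. bdry V E k f = 0}"
  define B :: "('a set \<Rightarrow> 'k) set" where "B = bdry V E (Suc k) ` chains V E (Suc k)"
  have iso2: "\<And>u. u \<in> V \<Longrightarrow> \<not> E u v" using iso sym by blast
  have "Z \<subseteq> B"
  proof
    fix z assume "z \<in> Z"
    then have z: "z \<in> chains V E k" "bdry V E k z = 0" by (auto simp: Z_def)
    have h0: "hom v (0::'a set \<Rightarrow> 'k) = 0" by (auto simp: hom_def fun_eq_iff)
    have "bdry V E (Suc k) (hom v z) = z"
    proof
      fix t show "bdry V E (Suc k) (hom v z) t = z t" using homotopy[OF v iso z(1), of t] z(2) h0 by simp
    qed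
    moreover have "hom v z \<in> chains V E (Suc k)" unfolding chains_iff
    proof (intro allI impI)
      fix s assume s: "s \<notin> faces V E (Suc k)"
      show "hom v z s = 0"
      proof (cases "v \<in> s")
        case True
        have "s - {v} \<notin> faces V E k"
        proof
          assume a: "s - {v} \<in> faces V E k"
          have "insert v (s - {v}) \<in> faces V E (Suc k)"
            using ins_face_iso[OF v iso a] by simp
          then show False using s True by (simp add: insert_absorb)
        qed
        then show ?thesis using z(1) True by (simp add: hom_def chains_iff)
      qed (simp add: hom_def)
    qed
    ultimately show "z \<in> B" unfolding B_def by (metis image_eqI)
  qed
  moreover have "B \<subseteq> fs.span (eb ` faces V E k)"
    using chains_span[OF fin, of E k] bdry_chains[of V E "Suc k"] by (auto simp: B_def)
  ultimately have "fs.dim Z \<le> fs.dim B"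
    using finite_faces[OF fin] by (intro fs.dim_mono_fin) auto
  then show ?thesis by (simp add: red_betti_def Z_def B_def)
qed

end


context gr begin

lemma betti_big:
  assumes "card V < k"
  shows "red_betti TYPE('k::field) V E k = 0"
proof -
  have "(chains V E k :: ('a set \<Rightarrow> 'k) set) \<subseteq> {0}"
  proof
    fix f :: "'a set \<Rightarrow> 'k" assume f: "f \<in> chains V E k"
    have "s \<notin> faces V E k" for s
    proof
      assume "s \<in> faces V E k"
      then have sV: "s \<subseteq> V" and "card s = k" by (auto simp: faces_iff)
      then show False using card_mono[OF fin sV] assms by simp
    qed
    then show "f \<in> {0}" using f by (auto simp: chains_iff)
  qed
  then have "fs.dim {f \<in> (chains V E k :: ('a set \<Rightarrow> 'k) set). bdry V E k f = 0} = 0"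
    by (intro dim_zero_set) auto
  then show ?thesis by (simp add: red_betti_def)
qed

lemma total_N:
  assumes "card V \<le> N"
  shows "total_red_betti TYPE('k::field) V E = (\<Sum>k\<le>N. red_betti TYPE('k) V E k)"
proof -
  have "(\<Sum>k\<le>N. red_betti TYPE('k) V E k) = (\<Sum>k\<in>{0..card V}. red_betti TYPE('k) V E k)"
  proof (rule sum.mono_neutral_right)
    show "finite {..N}" by simp
    show "{0..card V} \<subseteq> {..N}" using assms by auto
    show "\<forall>i\<in>{..N} - {0..card V}. red_betti TYPE('k) V E i = 0"
    proof
      fix i assume "i \<in> {..N} - {0..card V}"
      then have "card V < i" by auto
      then show "red_betti TYPE('k) V E i = 0" by (rule betti_big)
    qed
  qed
  then show ?thesis by (simp add: total_red_betti_def)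
qed

lemma total_isolated:
  assumes "v \<in> V" "\<And>u. u \<in> V \<Longrightarrow> \<not> E v u"
  shows "total_red_betti TYPE('k::field) V E = 0"
  using betti_isolated[OF assms, where 'k='k] by (simp add: total_red_betti_def)

lemma total_empty:
  assumes "V = {}"
  shows "total_red_betti TYPE('k::field) V E \<le> 1"
proof -
  have fe: "faces V E 0 = {{}}" using assms by (auto simp: faces_iff)
  have "red_betti TYPE('k) V E 0 \<le> fs.dim {f \<in> (chains V E 0 :: ('a set \<Rightarrow> 'k) set). bdry V E 0 f = 0}"
    by (simp add: red_betti_def)
  also have "\<dots> \<le> card (eb ` faces V E 0 :: ('a set \<Rightarrow> 'k) set)"
    using chains_span[OF fin, of E 0] finite_faces[OF fin] by (intro fs.dim_le_card) auto
  also have "\<dots> \<le> 1" using fe by simp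
  finally show ?thesis using assms by (simp add: total_red_betti_def)
qed

end

lemma gr_sub: "gr V E \<Longrightarrow> W \<subseteq> V \<Longrightarrow> gr W E"
  unfolding gr_def by (auto intro: finite_subset)

context gr begin

lemma total_step:
  assumes v: "v \<in> V"
  shows "total_red_betti TYPE('k::field) V E \<le> total_red_betti TYPE('k) (V - {v}) E
      + total_red_betti TYPE('k) {u \<in> V. u \<noteq> v \<and> \<not> E v u} E"
proof -
  define V2 where "V2 = {u \<in> V. u \<noteq> v \<and> \<not> E v u}"
  define n where "n = card V"
  have n1: "n \<ge> 1" using v fin by (auto simp: n_def card_gt_0_iff Suc_le_eq)
  then obtain m where m: "n = Suc m" by (cases n) auto
  have g1: "gr (V - {v}) E" and g2: "gr V2 E" using gr_sub[OF gr_axioms] by (auto simp: V2_def)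
  have c1: "card (V - {v}) \<le> n" using fin by (simp add: n_def card_mono)
  have "V2 \<subseteq> V - {v}" by (auto simp: V2_def)
  then have c2: "card V2 \<le> m" using fin v m card_mono[of "V - {v}" V2] by (simp add: n_def)
  have "total_red_betti TYPE('k) V E = (\<Sum>k\<le>n. red_betti TYPE('k) V E k)" by (rule total_N) (simp add: n_def)
  also have "\<dots> \<le> (\<Sum>k\<le>n. red_betti TYPE('k) (V - {v}) E k + (if k = 0 then 0 else red_betti TYPE('k) V2 E (k - 1)))"
    by (intro sum_mono betti_step[OF v, unfolded V2_def[symmetric]])
  also have "\<dots> = (\<Sum>k\<le>n. red_betti TYPE('k) (V - {v}) E k) + (\<Sum>k\<le>m. red_betti TYPE('k) V2 E k)"
    unfolding sum.distrib m sum.atMost_Suc_shift by simp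
  also have "\<dots> = total_red_betti TYPE('k) (V - {v}) E + total_red_betti TYPE('k) V2 E"
    using gr.total_N[OF g1 c1, where 'k='k] gr.total_N[OF g2 c2, where 'k='k] by simp
  finally show ?thesis by (simp add: V2_def)
qed

end


definition gB :: "nat \<Rightarrow> nat \<Rightarrow> real" where
  "gB n m = 4 ^ (m - 1) * 3 powr ((real n - 5 * (real m - 1)) / 4)"

definition qq :: real where "qq = 3 powr (-1/4)"

lemma qq_pos: "qq > 0" by (simp add: qq_def)

lemma qq_pow: "qq ^ d = 3 powr (- real d / 4)"
proof -
  have "qq ^ d = qq powr real d" using qq_pos by (simp add: powr_realpow)
  also have "\<dots> = 3 powr (- real d / 4)" by (simp add: qq_def powr_powr)
  finally show ?thesis .
qed

lemma qq4: "qq ^ 4 = 1/3"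
proof -
  have "qq ^ 4 = 3 powr (-1)" by (simp add: qq_pow)
  also have "\<dots> = 1/3" by (simp add: powr_minus)
  finally show ?thesis .
qed

lemma qq_bounds: "3/4 \<le> qq" "qq \<le> 77/100"
proof -
  show "3/4 \<le> qq"
  proof (rule ccontr)
    assume "\<not> 3/4 \<le> qq"
    then have "qq ^ 4 < (3/4) ^ 4" using qq_pos by (intro power_strict_mono) auto
    moreover have "(3/4::real)^4 = 81/256" by (simp add: power_divide)
    ultimately show False using qq4 by simp
  qed
  show "qq \<le> 77/100"
  proof (rule ccontr)
    assume "\<not> qq \<le> 77/100"
    then have "(77/100) ^ 4 < qq ^ 4" by (intro power_strict_mono) auto
    moreover have "(77/100::real)^4 = 35153041/100000000" by (simp add: power_divide)
    ultimately show False using qq4 by simp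
  qed
qed

lemma gB_shift: "d \<le> n \<Longrightarrow> gB (n - d) m = gB n m * qq ^ d"
proof -
  assume d: "d \<le> n"
  have "(real (n - d) - 5 * (real m - 1)) / 4 = (real n - 5 * (real m - 1)) / 4 + (- real d / 4)"
    using d by (simp add: of_nat_diff field_simps)
  then show ?thesis unfolding gB_def by (simp only: powr_add qq_pow mult.assoc)
qed

lemma gB_pos: "gB n m > 0" by (simp add: gB_def)

lemma gB_mono: "n \<le> n' \<Longrightarrow> gB n m \<le> gB n' m"
  by (simp add: gB_def)

lemma gB_K5: "m \<ge> 2 \<Longrightarrow> n \<ge> 5 \<Longrightarrow> 4 * gB (n - 5) (m - 1) = gB n m"
proof -
  assume m: "m \<ge> 2" and n: "n \<ge> 5"
  have e: "(real (n - 5) - 5 * (real (m - 1) - 1)) = real n - 5 * (real m - 1)"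
    using m n by (simp add: of_nat_diff)
  obtain j where j: "m = Suc (Suc j)" using m by (metis add_2_eq_Suc le_Suc_ex)
  have "(4::real) * 4 ^ (m - 1 - 1) = 4 ^ (m - 1)" using j by simp
  then show ?thesis unfolding gB_def e by simp
qed

lemma gB_base: "m \<ge> 1 \<Longrightarrow> 1 \<le> gB 0 m"
proof -
  assume "m \<ge> 1"
  then obtain j where j: "m = Suc j" by (metis Suc_le_D One_nat_def)
  have "3 powr ((real 0 - 5 * (real m - 1)) / 4) = qq ^ (5 * j)"
    using j by (simp add: qq_pow)
  then have "gB 0 m = (4 * qq ^ 5) ^ j" using j by (simp add: gB_def power_mult_distrib power_mult)
  moreover have "4 * qq ^ 5 \<ge> 1"
  proof -
    have "qq ^ 5 = qq ^ 4 * qq" by (simp add: power_Suc2[symmetric])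
    then have "qq ^ 5 = qq / 3" using qq4 by simp
    then show ?thesis using qq_bounds by simp
  qed
  ultimately show ?thesis by (metis one_le_power power_mult_distrib)
qed

lemma ineq_56: "qq + qq ^ 6 \<le> 1"
proof -
  have "qq ^ 6 = qq ^ 4 * qq ^ 2" by (simp add: power_add [symmetric])
  then have "qq ^ 6 = qq^2 / 3" using qq4 by simp
  moreover have "qq ^ 2 \<le> (77/100)^2" using qq_bounds qq_pos by (intro power_mono) auto
  moreover have "(77/100::real)^2 = 5929/10000" by (simp add: power_divide)
  ultimately show ?thesis using qq_bounds by simp
qed

lemma ineq_d4: "3 * qq ^ 5 + qq ^ 6 \<le> 1"
proof -
  have "qq ^ 5 = qq ^ 4 * qq" by (simp add: power_Suc2[symmetric])
  then have "qq ^ 5 = qq / 3" using qq4 by simp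
  then show ?thesis using ineq_56 by simp
qed

lemma ineq_d2: "2 * qq ^ 3 \<le> 1"
proof -
  have "qq ^ 3 \<le> (77/100)^3" using qq_bounds qq_pos by (intro power_mono) auto
  moreover have "(77/100::real)^3 = 456533/1000000" by (simp add: power3_eq_cube)
  ultimately show ?thesis by simp
qed

lemma ineq_d3: "3 * qq ^ 4 = 1" using qq4 by simp


locale sg =
  fixes E :: "'a::linorder \<Rightarrow> 'a \<Rightarrow> bool"
  assumes sym: "\<And>x y. E x y \<Longrightarrow> E y x" and irr: "\<And>x. \<not> E x x"
begin

lemma gr_fin: "finite W \<Longrightarrow> gr W E"
  using sym irr by (auto simp: gr_def)

abbreviation nb :: "'a \<Rightarrow> 'a set" where "nb w \<equiv> insert w (Collect (E w))"

lemma step_b: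
  assumes "finite X" "v \<in> X"
  shows "total_red_betti TYPE('k::field) X E \<le> total_red_betti TYPE('k) (X - {v}) E
      + total_red_betti TYPE('k) (X - nb v) E"
proof -
  have "{u \<in> X. u \<noteq> v \<and> \<not> E v u} = X - nb v" by auto
  then show ?thesis using gr.total_step[OF gr_fin[OF assms(1)] assms(2), where 'k='k] by simp
qed

lemma NE:
  assumes "finite X" "distinct ws" "set ws \<subseteq> X"
  shows "total_red_betti TYPE('k::field) X E \<le> total_red_betti TYPE('k) (X - set ws) E
     + (\<Sum>i<length ws. total_red_betti TYPE('k) (X - set (take i ws) - nb (ws ! i)) E)"
  using assms
proof (induction ws arbitrary: X)
  case Nil
  then show ?case by simp
next
  case (Cons w ws)
  have fX: "finite (X - {w})" using Cons.prems by simp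
  have IH: "total_red_betti TYPE('k) (X - {w}) E \<le> total_red_betti TYPE('k) (X - {w} - set ws) E
     + (\<Sum>i<length ws. total_red_betti TYPE('k) (X - {w} - set (take i ws) - nb (ws ! i)) E)"
    using Cons.IH[OF fX] Cons.prems by auto
  have e1: "X - {w} - set ws = X - set (w # ws)" by auto
  have e2: "(\<Sum>i<length ws. total_red_betti TYPE('k) (X - {w} - set (take i ws) - nb (ws ! i)) E)
     = (\<Sum>i<length ws. total_red_betti TYPE('k) (X - set (take (Suc i) (w # ws)) - nb ((w # ws) ! Suc i)) E)"
  proof (rule sum.cong[OF refl])
    fix i
    have "X - {w} - set (take i ws) = X - set (take (Suc i) (w # ws))" by auto
    then show "total_red_betti TYPE('k) (X - {w} - set (take i ws) - nb (ws ! i)) E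
       = total_red_betti TYPE('k) (X - set (take (Suc i) (w # ws)) - nb ((w # ws) ! Suc i)) E" by simp
  qed
  have "total_red_betti TYPE('k) X E \<le> total_red_betti TYPE('k) (X - {w}) E + total_red_betti TYPE('k) (X - nb w) E"
    using step_b[OF Cons.prems(1), of w] Cons.prems by auto
  also have "\<dots> \<le> total_red_betti TYPE('k) (X - set (w # ws)) E
     + ((\<Sum>i<length ws. total_red_betti TYPE('k) (X - set (take (Suc i) (w # ws)) - nb ((w # ws) ! Suc i)) E)
     + total_red_betti TYPE('k) (X - nb w) E)"
    using IH unfolding e1 e2 by simp
  also have "\<dots> = total_red_betti TYPE('k) (X - set (w # ws)) E
     + (\<Sum>i<length (w # ws). total_red_betti TYPE('k) (X - set (take i (w # ws)) - nb ((w # ws) ! i)) E)"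
    by (simp only: length_Cons sum.lessThan_Suc_shift) simp
  finally show ?case .
qed

definition deg :: "'a set \<Rightarrow> 'a \<Rightarrow> nat" where "deg W w = card {u \<in> W. E w u}"

lemma card_nb:
  assumes "finite W" "w \<in> W"
  shows "card (W \<inter> nb w) = Suc (deg W w)"
proof -
  have "W \<inter> nb w = insert w {u \<in> W. E w u}" using assms by auto
  moreover have "w \<notin> {u \<in> W. E w u}" using irr by auto
  ultimately show ?thesis using assms by (simp add: deg_def)
qed

lemma card_rem:
  assumes "finite W"
  shows "card (W - A) = card W - card (W \<inter> A)"
proof -
  have "W - A = W - (W \<inter> A)" by auto
  then show ?thesis using assms by (simp add: card_Diff_subset)
qed

lemma has_mono: "has_induced_mK5 W' E m \<Longrightarrow> W' \<subseteq> W \<Longrightarrow> has_induced_mK5 W E m"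
proof -
  assume a: "has_induced_mK5 W' E m" and s: "W' \<subseteq> W"
  then obtain B :: "nat \<Rightarrow> 'a set" where
    B: "(\<forall>i<m. B i \<subseteq> W' \<and> card (B i) = 5 \<and> (\<forall>u\<in>B i. \<forall>v\<in>B i. u \<noteq> v \<longrightarrow> E u v))"
       "(\<forall>i<m. \<forall>j<m. i \<noteq> j \<longrightarrow> B i \<inter> B j = {} \<and> (\<forall>u\<in>B i. \<forall>v\<in>B j. \<not> E u v))"
    unfolding has_induced_mK5_def by blast
  have "\<forall>i<m. B i \<subseteq> W" using B(1) s by blast
  then show ?thesis unfolding has_induced_mK5_def using B by blast
qed

end


context sg begin

lemma term_card:
  assumes "finite W" "w \<in> W"
  shows "card (W - A - nb w) \<le> card W - Suc (deg W w)" "card (W - A - nb w) < card W"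
proof -
  have e: "W - A - nb w = W - (A \<union> nb w)" by auto
  have "card (W \<inter> nb w) \<le> card (W \<inter> (A \<union> nb w))" using assms by (intro card_mono) auto
  then show 1: "card (W - A - nb w) \<le> card W - Suc (deg W w)"
    unfolding e card_rem[OF assms(1)] card_nb[OF assms] by simp
  have "card W \<ge> 1" using assms by (auto simp: Suc_le_eq card_gt_0_iff)
  then show "card (W - A - nb w) < card W" using 1 by simp
qed

lemma NEb:
  assumes fin: "finite W" and v: "v \<in> W" and ws: "distinct ws" "set ws = {u \<in> W. E v u}"
  shows "total_red_betti TYPE('k::field) W E
     \<le> (\<Sum>i<length ws. total_red_betti TYPE('k) (W - set (take i ws) - nb (ws ! i)) E)"
proof -
  have "total_red_betti TYPE('k) (W - set ws) E = 0"
  proof (rule gr.total_isolated[OF gr_fin])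
    show "finite (W - set ws)" using fin by simp
    show "v \<in> W - set ws" using v ws irr by auto
    show "\<And>u. u \<in> W - set ws \<Longrightarrow> \<not> E v u" using ws by auto
  qed
  then show ?thesis using NE[OF fin ws(1), where 'k='k] ws(2) by auto
qed

lemma clique_nb:
  assumes fin: "finite W" and v: "v \<in> W" and d4: "deg W v = 4"
    and cl: "\<forall>a\<in>{u \<in> W. E v u}. \<forall>c\<in>{u \<in> W. E v u}. a \<noteq> c \<longrightarrow> E a c"
    and mx: "\<forall>u\<in>W. deg W u \<le> 4" and w: "w \<in> insert v {u \<in> W. E v u}"
  shows "W \<inter> nb w = insert v {u \<in> W. E v u}"
proof -
  let ?C = "insert v {u \<in> W. E v u}"
  have wW: "w \<in> W" using w v by auto
  have sub: "?C - {w} \<subseteq> {u \<in> W. E w u}"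
  proof
    fix x assume x: "x \<in> ?C - {w}"
    show "x \<in> {u \<in> W. E w u}"
    proof (cases "w = v")
      case True then show ?thesis using x by auto
    next
      case False
      then have wN: "E v w" using w by auto
      show ?thesis
      proof (cases "x = v")
        case True then show ?thesis using wN sym v by auto
      next
        case False
        have xN: "x \<in> {u \<in> W. E v u}" "x \<noteq> w" using x False by auto
        have wN: "w \<in> {u \<in> W. E v u}" using w \<open>w \<noteq> v\<close> by auto
        have "E w x" using bspec[OF bspec[OF cl wN] xN(1)] xN(2) by auto
        then show ?thesis using xN by simp
      qed
    qed
  qed
  have cC: "card ?C = 5"
  proof -
    have "v \<notin> {u \<in> W. E v u}" using irr by auto
    then show ?thesis using fin d4 by (simp add: deg_def)
  qed
  have "card (?C - {w}) = 4" using cC w by simp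
  moreover have "card {u \<in> W. E w u} \<le> 4" using mx wW by (simp add: deg_def)
  moreover have "finite {u \<in> W. E w u}" using fin by simp
  ultimately have eq: "?C - {w} = {u \<in> W. E w u}" using card_seteq[OF _ sub] by simp
  have "W \<inter> nb w = insert w {u \<in> W. E w u}" using wW by auto
  also have "\<dots> = insert w (?C - {w})" using eq by simp
  also have "\<dots> = ?C" using w by auto
  finally show ?thesis .
qed

end


context sg begin

lemma clique_C:
  assumes cl: "\<forall>a\<in>{u \<in> W. E v u}. \<forall>c\<in>{u \<in> W. E v u}. a \<noteq> c \<longrightarrow> E a c"
  shows "\<forall>x\<in>insert v {u \<in> W. E v u}. \<forall>y\<in>insert v {u \<in> W. E v u}. x \<noteq> y \<longrightarrow> E x y"
proof (intro ballI impI)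
  fix x y assume x: "x \<in> insert v {u \<in> W. E v u}" and y: "y \<in> insert v {u \<in> W. E v u}" and xy: "x \<noteq> y"
  show "E x y"
  proof (cases "x = v")
    case True then show ?thesis using y xy by auto
  next
    case xv: False
    show ?thesis
    proof (cases "y = v")
      case True then show ?thesis using x xv sym by auto
    next
      case False
      then have xN: "x \<in> {u \<in> W. E v u}" and yN: "y \<in> {u \<in> W. E v u}" using x y xv by auto
      then show ?thesis using bspec[OF bspec[OF cl xN] yN] xy by auto
    qed
  qed
qed

lemma extend_has:
  assumes m: "m \<ge> 2" and CW: "C \<subseteq> W" and cC: "card C = 5"
    and cl: "\<forall>x\<in>C. \<forall>y\<in>C. x \<noteq> y \<longrightarrow> E x y"
    and nbC: "\<forall>w\<in>C. W \<inter> nb w = C"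
    and h: "has_induced_mK5 (W - C) E (m - 1)"
  shows "has_induced_mK5 W E m"
proof -
  obtain D :: "nat \<Rightarrow> 'a set" where
    D1: "\<forall>i<m - 1. D i \<subseteq> W - C \<and> card (D i) = 5 \<and> (\<forall>u\<in>D i. \<forall>v\<in>D i. u \<noteq> v \<longrightarrow> E u v)"
    and D2: "\<forall>i<m - 1. \<forall>j<m - 1. i \<noteq> j \<longrightarrow> D i \<inter> D j = {} \<and> (\<forall>u\<in>D i. \<forall>v\<in>D j. \<not> E u v)"
    using h unfolding has_induced_mK5_def by blast
  define B where "B i = (if i < m - 1 then D i else C)" for i
  have noE: "\<not> E u x" "\<not> E x u" if "u \<in> C" "x \<in> W - C" for u x
  proof -
    have "W \<inter> nb u = C" using nbC that(1) by blast
    then show "\<not> E u x" using that(2) by auto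
    then show "\<not> E x u" using sym by blast
  qed
  have P1: "\<forall>i<m. B i \<subseteq> W \<and> card (B i) = 5 \<and> (\<forall>u\<in>B i. \<forall>v\<in>B i. u \<noteq> v \<longrightarrow> E u v)"
  proof (intro allI impI)
    fix i assume "i < m"
    show "B i \<subseteq> W \<and> card (B i) = 5 \<and> (\<forall>u\<in>B i. \<forall>v\<in>B i. u \<noteq> v \<longrightarrow> E u v)"
    proof (cases "i < m - 1")
      case True then show ?thesis using D1 by (auto simp: B_def)
    next
      case False then show ?thesis using CW cC cl by (simp add: B_def)
    qed
  qed
  have P2: "\<forall>i<m. \<forall>j<m. i \<noteq> j \<longrightarrow> B i \<inter> B j = {} \<and> (\<forall>u\<in>B i. \<forall>v\<in>B j. \<not> E u v)"
  proof (intro allI impI)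
    fix i j assume ij: "i < m" "j < m" "i \<noteq> j"
    show "B i \<inter> B j = {} \<and> (\<forall>u\<in>B i. \<forall>v\<in>B j. \<not> E u v)"
    proof (cases "i < m - 1"; cases "j < m - 1")
      assume "i < m - 1" "j < m - 1" then show ?thesis using D2 ij by (simp add: B_def)
    next
      assume a: "i < m - 1" "\<not> j < m - 1"
      then have "B i \<subseteq> W - C" "B j = C" using D1 by (auto simp: B_def)
      then show ?thesis using noE by blast
    next
      assume a: "\<not> i < m - 1" "j < m - 1"
      then have "B j \<subseteq> W - C" "B i = C" using D1 by (auto simp: B_def)
      then show ?thesis using noE by blast
    next
      assume "\<not> i < m - 1" "\<not> j < m - 1" then show ?thesis using ij by simp
    qed
  qed
  show ?thesis unfolding has_induced_mK5_def using P1 P2 by blast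
qed

end


context sg begin

lemma main:
  fixes W :: "'a set"
  assumes "finite W" "m \<ge> 1" "\<not> has_induced_mK5 W E m"
  shows "real (total_red_betti TYPE('k::field) W E) \<le> gB (card W) m"
  using assms
proof (induction "card W" arbitrary: W m rule: less_induct)
  case less
  note fin = less.prems(1) and m1 = less.prems(2) and nh = less.prems(3)
  define n where "n = card W"
  define b where "b X = real (total_red_betti TYPE('k) X E)" for X
  have IH: "b X \<le> gB c m" if X: "X \<subseteq> W" "card X < n" "card X \<le> c" for X c
  proof -
    have "\<not> has_induced_mK5 X E m" using nh has_mono[of X m W] X(1) by blast
    moreover have "finite X" using fin X(1) finite_subset by blast
    ultimately have "b X \<le> gB (card X) m" unfolding b_def
      using less.hyps[of X m] X(2) m1 by (simp add: n_def)
    also have "\<dots> \<le> gB c m" by (rule gB_mono) (rule X(3))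
    finally show ?thesis .
  qed
  have goal: "b W \<le> gB n m"
  proof (cases "W = {}")
    case True
    have "total_red_betti TYPE('k) W E \<le> 1" by (rule gr.total_empty[OF gr_fin[OF fin] True])
    then have "b W \<le> 1" by (simp add: b_def)
    also have "\<dots> \<le> gB n m" using gB_base[OF m1] True by (simp add: n_def)
    finally show ?thesis .
  next
    case Wne: False
    show ?thesis
    proof (cases "\<exists>v\<in>W. deg W v \<ge> 5")
      case True
      then obtain v where v: "v \<in> W" "deg W v \<ge> 5" by blast
      have c1: "card (W - {v}) = n - 1" "card (W - {v}) < n"
        using v fin card_Diff1_less[OF fin v(1)] by (auto simp: n_def)
      have "W - {} - nb v = W - nb v" by simp
      then have c2: "card (W - nb v) \<le> n - 6" "card (W - nb v) < n"
        using term_card[OF fin v(1), of "{}"] v(2) by (auto simp: n_def)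
      have "Suc (deg W v) \<le> n" using card_nb[OF fin v(1)] card_mono[OF fin, of "W \<inter> nb v"]
        by (simp add: n_def)
      then have n6: "6 \<le> n" using v(2) by simp
      have "total_red_betti TYPE('k) W E \<le> total_red_betti TYPE('k) (W - {v}) E + total_red_betti TYPE('k) (W - nb v) E"
        by (rule step_b[OF fin v(1)])
      then have "b W \<le> b (W - {v}) + b (W - nb v)" unfolding b_def
        by (simp only: of_nat_add[symmetric] of_nat_le_iff)
      also have "\<dots> \<le> gB (n - 1) m + gB (n - 6) m"
        using IH[of "W - {v}" "n - 1"] IH[of "W - nb v" "n - 6"] c1 c2 by fastforce
      also have "\<dots> = gB n m * (qq + qq ^ 6)"
        using gB_shift[of 1 n m] gB_shift[of 6 n m] n6 by (simp add: algebra_simps)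
      also have "\<dots> \<le> gB n m" using ineq_56 gB_pos[of n m] by (simp add: mult_left_le)
      finally show ?thesis .
    next
      case False
      then have mx: "\<forall>u\<in>W. deg W u \<le> 4" by auto
      define v where "v = arg_min_on (deg W) W"
      have v: "v \<in> W" and vmin: "\<forall>u\<in>W. deg W v \<le> deg W u"
        using arg_min_if_finite[OF fin Wne, of "deg W"] by (auto simp: v_def not_less)
      define N where "N = {u \<in> W. E v u}"
      define d where "d = deg W v"
      have cN: "card N = d" by (simp add: N_def d_def deg_def)
      have finN: "finite N" using fin by (simp add: N_def)
      have NW: "N \<subseteq> W" by (auto simp: N_def)
      have d4: "d \<le> 4" using mx v by (simp add: d_def)
      have dn: "Suc d \<le> n" using card_nb[OF fin v] card_mono[OF fin, of "W \<inter> nb v"]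
        by (simp add: n_def d_def)
      have termb: "b (W - set (take i ws) - nb (ws ! i)) \<le> gB (n - Suc d) m"
        if ws: "distinct ws" "set ws = N" "i < length ws" for ws i
      proof -
        have wN: "ws ! i \<in> N" using ws nth_mem by blast
        then have wW: "ws ! i \<in> W" using NW by blast
        have "d \<le> deg W (ws ! i)" using vmin wW by (simp add: d_def)
        then show ?thesis using term_card[OF fin wW, of "set (take i ws)"]
          by (intro IH) (auto simp: n_def)
      qed
      have NEr: "b W \<le> (\<Sum>i<length ws. b (W - set (take i ws) - nb (ws ! i)))"
        if ws: "distinct ws" "set ws = N" for ws
      proof -
        have "total_red_betti TYPE('k) W E
            \<le> (\<Sum>i<length ws. total_red_betti TYPE('k) (W - set (take i ws) - nb (ws ! i)) E)"
          by (rule NEb[OF fin v ws(1)]) (simp add: ws(2) N_def)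
        then have "real (total_red_betti TYPE('k) W E)
            \<le> real (\<Sum>i<length ws. total_red_betti TYPE('k) (W - set (take i ws) - nb (ws ! i)) E)"
          by (simp only: of_nat_le_iff)
        also have "\<dots> = (\<Sum>i<length ws. real (total_red_betti TYPE('k) (W - set (take i ws) - nb (ws ! i)) E))"
          by (rule of_nat_sum)
        finally show ?thesis unfolding b_def .
      qed
      show ?thesis
      proof (cases "d = 0")
        case True
        have "total_red_betti TYPE('k) W E = 0"
        proof (rule gr.total_isolated[OF gr_fin[OF fin] v])
          fix u assume "u \<in> W"
          then show "\<not> E v u" using True cN finN by (auto simp: N_def)
        qed
        then show ?thesis using gB_pos[of n m] by (simp add: b_def)
      next
        case d0: False
        show ?thesis
        proof (cases "d \<le> 3")
          case True
          define ws where "ws = sorted_list_of_set N"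
          have ws: "distinct ws" "set ws = N" "length ws = d"
            using finN cN by (auto simp: ws_def)
          have "b W \<le> (\<Sum>i<length ws. b (W - set (take i ws) - nb (ws ! i)))" by (rule NEr[OF ws(1,2)])
          also have "\<dots> \<le> (\<Sum>i<length ws. gB (n - Suc d) m)"
            by (rule sum_mono) (rule termb[OF ws(1,2)], simp)
          also have "\<dots> = real d * (gB n m * qq ^ Suc d)" using ws(3) gB_shift[OF dn, of m] by simp
          also have "\<dots> = gB n m * (real d * qq ^ Suc d)" by simp
          also have "\<dots> \<le> gB n m"
          proof -
            have "real d * qq ^ Suc d \<le> 1"
            proof -
              have "d = 1 \<or> d = 2 \<or> d = 3" using True d0 by auto
              moreover have "qq ^ 2 \<le> 1" using qq_bounds qq_pos by (intro power_le_one) auto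
              moreover have e: "qq * qq = qq^2" "qq * qq^2 = qq^3" "qq * qq^3 = qq^4"
                by (simp_all add: power2_eq_square power3_eq_cube power4_eq_xxxx)
              ultimately show ?thesis using ineq_d2 ineq_d3 by auto
            qed
            then show ?thesis using gB_pos[of n m] by (simp add: mult_left_le)
          qed
          finally show ?thesis .
        next
          case False
          then have d4': "d = 4" using d4 by simp
          show ?thesis
          proof (cases "\<forall>a\<in>N. \<forall>c\<in>N. a \<noteq> c \<longrightarrow> E a c")
            case True
            define C where "C = insert v N"
            have cl: "\<forall>a\<in>{u \<in> W. E v u}. \<forall>c\<in>{u \<in> W. E v u}. a \<noteq> c \<longrightarrow> E a c"
              using True by (simp only: N_def)
            have nbC: "\<forall>w\<in>C. W \<inter> nb w = C"
            proof
              fix w assume "w \<in> C"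
              then have w: "w \<in> insert v {u \<in> W. E v u}" by (simp add: C_def N_def)
              have dv: "deg W v = 4" using d4' by (simp add: d_def)
              show "W \<inter> nb w = C" using clique_nb[OF fin v dv cl mx w] by (simp only: C_def N_def)
            qed
            have CW: "C \<subseteq> W" using v NW by (auto simp: C_def)
            have vN: "v \<notin> N" using irr by (auto simp: N_def)
            have cC: "card C = 5" using cN d4' finN vN by (simp add: C_def)
            have clC: "\<forall>x\<in>C. \<forall>y\<in>C. x \<noteq> y \<longrightarrow> E x y"
              using clique_C[OF cl] by (simp only: C_def N_def)
            define ws where "ws = sorted_list_of_set N"
            have ws: "distinct ws" "set ws = N" "length ws = 4"
              using finN cN d4' by (auto simp: ws_def)
            have teq: "W - set (take i ws) - nb (ws ! i) = W - C" if i: "i < length ws" for i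
            proof -
              have "ws ! i \<in> N" using ws(2) nth_mem[OF i] by simp
              then have wC: "ws ! i \<in> C" by (simp add: C_def)
              have TC: "set (take i ws) \<subseteq> C" using set_take_subset[of i ws] ws(2) by (auto simp: C_def)
              have e: "W \<inter> nb (ws ! i) = C" using nbC wC by blast
              show ?thesis
              proof (intro set_eqI iffI)
                fix x assume "x \<in> W - set (take i ws) - nb (ws ! i)"
                then show "x \<in> W - C" using e by blast
              next
                fix x assume "x \<in> W - C"
                then show "x \<in> W - set (take i ws) - nb (ws ! i)" using e TC by blast
              qed
            qed
            have bW: "b W \<le> 4 * b (W - C)"
            proof -
              have "b W \<le> (\<Sum>i<length ws. b (W - set (take i ws) - nb (ws ! i)))" by (rule NEr[OF ws(1,2)])
              also have "\<dots> = (\<Sum>i<length ws. b (W - C))" using teq by simp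
              also have "\<dots> = 4 * b (W - C)" using ws(3) by simp
              finally show ?thesis .
            qed
            show ?thesis
            proof (cases "m = 1")
              case True
              have "has_induced_mK5 W E m" unfolding has_induced_mK5_def True
                by (rule exI[of _ "\<lambda>_. C"]) (use CW cC clC in auto)
              then show ?thesis using nh by simp
            next
              case False
              then have m2: "m \<ge> 2" using m1 by simp
              have nh2: "\<not> has_induced_mK5 (W - C) E (m - 1)"
                using extend_has[OF m2 CW cC clC nbC] nh by blast
              have cWC: "card (W - C) = n - 5"
                using card_Diff_subset[OF finite_subset[OF CW fin] CW] cC by (simp add: n_def)
              have n5: "n \<ge> 5" using card_mono[OF fin CW] cC by (simp add: n_def)
              have "b (W - C) \<le> gB (card (W - C)) (m - 1)" unfolding b_def
                using less.hyps[of "W - C" "m - 1"] nh2 fin m2 cWC n5 by (simp add: n_def)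
              then have "4 * b (W - C) \<le> 4 * gB (n - 5) (m - 1)" using cWC by simp
              also have "\<dots> = gB n m" by (rule gB_K5[OF m2 n5])
              finally show ?thesis using bW by simp
            qed
          next
            case False
            then obtain a c where ac: "a \<in> N" "c \<in> N" "a \<noteq> c" "\<not> E a c" by blast
            define rest where "rest = sorted_list_of_set (N - {a, c})"
            define ws where "ws = a # c # rest"
            have rest: "distinct rest" "set rest = N - {a, c}" "length rest = 2"
              using finN cN d4' ac by (auto simp: rest_def card_Diff_subset)
            have ws: "distinct ws" "set ws = N" "length ws = 4"
              using rest ac by (auto simp: ws_def)
            have cW: "c \<in> W" "a \<in> W" using ac NW by auto
            have anb: "a \<notin> nb c" using ac sym by auto
            have "insert a (W \<inter> nb c) \<subseteq> W \<inter> ({a} \<union> nb c)" using cW by auto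
            then have "card (insert a (W \<inter> nb c)) \<le> card (W \<inter> ({a} \<union> nb c))"
              using fin by (intro card_mono) auto
            then have cc: "Suc (Suc (deg W c)) \<le> card (W \<inter> ({a} \<union> nb c))"
              using card_nb[OF fin cW(1)] anb fin by simp
            have dc: "deg W c \<ge> 4" using vmin cW d4' by (simp add: d_def)
            have "card (W \<inter> ({a} \<union> nb c)) \<le> n" using card_mono[OF fin, of "W \<inter> ({a} \<union> nb c)"]
              by (simp add: n_def)
            then have n6: "6 \<le> n" using cc dc by simp
            have t1: "b (W - set (take 1 ws) - nb (ws ! 1)) \<le> gB (n - 6) m"
            proof -
              have e: "W - set (take 1 ws) - nb (ws ! 1) = W - ({a} \<union> nb c)" by (auto simp: ws_def)
              have "card (W - ({a} \<union> nb c)) \<le> n - 6"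
                unfolding card_rem[OF fin] using cc dc by (simp add: n_def)
              moreover have "card (W - ({a} \<union> nb c)) < n"
              proof -
                have eq2: "W - {a} - nb c = W - ({a} \<union> nb c)" by auto
                have "card (W - {a} - nb c) < card W" by (rule term_card(2)[OF fin cW(1)])
                then show ?thesis unfolding eq2 n_def .
              qed
              ultimately show ?thesis unfolding e by (intro IH) auto
            qed
            have "b W \<le> (\<Sum>i<length ws. b (W - set (take i ws) - nb (ws ! i)))" by (rule NEr[OF ws(1,2)])
            also have "\<dots> \<le> (\<Sum>i<(4::nat). if i = 1 then gB (n - 6) m else gB (n - 5) m)"
              unfolding ws(3)
            proof (rule sum_mono)
              fix i assume i: "i \<in> {..<4::nat}"
              show "b (W - set (take i ws) - nb (ws ! i)) \<le> (if i = 1 then gB (n - 6) m else gB (n - 5) m)"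
                using t1 termb[OF ws(1,2), of i] i ws(3) d4' by auto
            qed
            also have "\<dots> = 3 * gB (n - 5) m + gB (n - 6) m" by (simp add: eval_nat_numeral)
            also have "\<dots> = gB n m * (3 * qq ^ 5 + qq ^ 6)"
            proof -
              show ?thesis using n6 gB_shift[of 5 n m] gB_shift[of 6 n m] by (simp add: algebra_simps)
            qed
            also have "\<dots> \<le> gB n m" using ineq_d4 gB_pos[of n m] by (simp add: mult_left_le)
            finally show ?thesis .
          qed
        qed
      qed
    qed
  qed
  then show ?case by (simp add: b_def n_def)
qed

end


theorem proposition6p3:
  fixes V :: "'a::linorder set" and E :: "'a \<Rightarrow> 'a \<Rightarrow> bool" and m :: nat
  assumes "simple_graph V E"
    and "m \<ge> 1"
    and "\<not> has_induced_mK5 V E m"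
  shows "real (total_red_betti TYPE('k::field) V E)
           \<le> 4 ^ (m - 1) * 3 powr ((real (card V) - 5 * (real m - 1)) / 4)"
proof -
  have fin: "finite V" and sym: "\<And>x y. E x y \<Longrightarrow> E y x" and irr: "\<And>x. \<not> E x x"
    using assms(1) by (auto simp: simple_graph_def)
  interpret sg E using sym irr by unfold_locales auto
  show ?thesis using main[OF fin assms(2,3), where 'k='k] by (simp add: gB_def)
qed

end
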